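(* Let $\mathcal{CP}$ be a $d$-dimensional cube packing with $N$ cubes, and write $N=4q+r$ with integers $q\geq 0$, $0\le r\le 3$. Then $$m_1(\mathcal{CP})=\left(\frac{3^d}{4^d}\right)N\quad\text{and}\quad m_1(\mathcal{CP})+N(N-1)2^{-d}+2^{-d}\,d\,\{2q(q-1)+rq\}\le m_2(\mathcal{CP}).$$
   Context: A $d$-dimensional cube packing is a $4\mathbb{Z}^d$-invariant set of pairwise disjoint translates $y+[0,2[^d$ with $y\in\mathbb{Z}^d$; its number of cubes $N$ is the number of $4\mathbb{Z}^d$-orbits of its cubes. For $z\in\mathbb{Z}^d$, $N_z(\mathcal{CP})$ is the number of cubes of $\mathcal{CP}$ contained in $z+[0,4[^d$. For a $4\mathbb{Z}^d$-periodic function $g$ on $\mathbb{Z}^d$, its average is $E(g)=4^{-d}\sum_{z\in\{0,1,2,3\}^d}g(z)$, and the $i$-th moment of $\mathcal{CP}$ is $m_i(\mathcal{CP})=E(N_z(\mathcal{CP})^i)$. *)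

theory Defs
  imports "HOL-Analysis.Analysis"
begin

text \<open>Dimension d = CARD('d). Points of Z^d are int ^ 'd, points of R^d are real ^ 'd.
  A cube packing is represented by the set of its translation vectors y (cube y + [0,2[^d).\<close>

definition cube :: "int ^ 'd::finite \<Rightarrow> (real ^ 'd) set" where
  "cube y = {x. \<forall>i. real_of_int (y $ i) \<le> x $ i \<and> x $ i < real_of_int (y $ i) + 2}"

definition box4 :: "int ^ 'd::finite \<Rightarrow> (real ^ 'd) set" where
  "box4 z = {x. \<forall>i. real_of_int (z $ i) \<le> x $ i \<and> x $ i < real_of_int (z $ i) + 4}"

definition cube_packing :: "(int ^ 'd::finite) set \<Rightarrow> bool" where
  "cube_packing CP \<longleftrightarrow>
     (\<forall>y\<in>CP. \<forall>k::int ^ 'd. y + (\<chi> i. 4 * k $ i) \<in> CP) \<and>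
     (\<forall>y\<in>CP. \<forall>y'\<in>CP. y \<noteq> y' \<longrightarrow> cube y \<inter> cube y' = {})"

text \<open>Number of cubes: number of 4Z^d-orbits of cubes (orbits identified by residues mod 4).\<close>
definition num_cubes :: "(int ^ 'd::finite) set \<Rightarrow> nat" where
  "num_cubes CP = card ((\<lambda>y. \<chi> i. y $ i mod 4) ` CP)"

definition N_z :: "(int ^ 'd::finite) set \<Rightarrow> int ^ 'd \<Rightarrow> nat" where
  "N_z CP z = card {y\<in>CP. cube y \<subseteq> box4 z}"

definition avg :: "(int ^ 'd::finite \<Rightarrow> real) \<Rightarrow> real" where
  "avg g = (1 / 4 ^ CARD('d)) * (\<Sum>z\<in>{z::int ^ 'd. \<forall>i. 0 \<le> z $ i \<and> z $ i \<le> 3}. g z)"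

definition moment :: "nat \<Rightarrow> (int ^ 'd::finite) set \<Rightarrow> real" where
  "moment k CP = avg (\<lambda>z. real (N_z CP z) ^ k)"

end

theory Submission
  imports Defs
begin



definition wi :: "int \<Rightarrow> int \<Rightarrow> real" where
  "wi a t = (if (a - t) mod 4 \<le> 2 then 1 else 0)"

definition res :: "int ^ 'd::finite \<Rightarrow> int ^ 'd" where
  "res y = (\<chi> i. y $ i mod 4)"

lemma box_eq: "{z::int ^ 'd::finite. \<forall>i. 0 \<le> z $ i \<and> z $ i \<le> 3} = vec_lambda ` (PiE UNIV (\<lambda>_. {0..3}))"
proof
  show "{z::int ^ 'd::finite. \<forall>i. 0 \<le> z $ i \<and> z $ i \<le> 3} \<subseteq> vec_lambda ` (PiE UNIV (\<lambda>_. {0..3}))"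
  proof
    fix z :: "int ^ 'd" assume "z \<in> {z. \<forall>i. 0 \<le> z $ i \<and> z $ i \<le> 3}"
    then have "vec_nth z \<in> PiE UNIV (\<lambda>_. {0..3})" by auto
    then show "z \<in> vec_lambda ` (PiE UNIV (\<lambda>_. {0..3}))"
      by (metis rev_image_eqI vec_nth_inverse)
  qed
qed auto

lemma box_finite: "finite {z::int ^ 'd::finite. \<forall>i. 0 \<le> z $ i \<and> z $ i \<le> 3}"
  unfolding box_eq by (intro finite_imageI finite_PiE) auto

lemma sum_prod_box:
  fixes f :: "'d::finite \<Rightarrow> int \<Rightarrow> real"
  shows "(\<Sum>z\<in>{z::int ^ 'd. \<forall>i. 0 \<le> z $ i \<and> z $ i \<le> 3}. \<Prod>i\<in>UNIV. f i (z $ i))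
     = (\<Prod>i\<in>UNIV. \<Sum>t\<in>{0..3}. f i t)"
proof -
  have inj: "inj_on vec_lambda (PiE (UNIV::'d set) (\<lambda>_. {0..3::int}))"
    by (intro inj_onI) (metis vec_lambda_inverse UNIV_I)
  show ?thesis
    unfolding box_eq
    by (simp add: sum.reindex[OF inj] prod_sum_PiE)
qed

lemma sum4:
  fixes f :: "int \<Rightarrow> 'a::comm_monoid_add"
  shows "(\<Sum>t\<in>{0..3::int}. f t) = f 0 + f 1 + f 2 + f 3"
proof -
  have "{0..3::int} = {0,1,2,3}" by auto
  then show ?thesis by (simp add: add.assoc)
qed

lemma wi_sum: "a \<in> {0..3} \<Longrightarrow> (\<Sum>t\<in>{0..3}. wi a t) = 3"
proof -
  assume "a \<in> {0..3}"
  then have "a \<in> {0,1,2,3}" by auto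
  then show ?thesis unfolding sum4 by (elim insertE emptyE; simp add: wi_def)
qed

lemma wi_sum2: "a \<in> {0..3} \<Longrightarrow> b \<in> {0..3} \<Longrightarrow>
   (\<Sum>t\<in>{0..3}. wi a t * wi b t) = (if a = b then 3 else 2)"
proof -
  assume "a \<in> {0..3}" "b \<in> {0..3}"
  then have "a \<in> {0,1,2,3}" "b \<in> {0,1,2,3}" by auto
  then show ?thesis unfolding sum4 by (elim insertE emptyE; simp add: wi_def)
qed

lemma cube_sub: "cube y \<subseteq> box4 z \<longleftrightarrow> (\<forall>i. z$i \<le> y$i \<and> y$i \<le> z$i + 2)"
proof
  assume h: "cube y \<subseteq> box4 z"
  show "\<forall>i. z$i \<le> y$i \<and> y$i \<le> z$i + 2"
  proof
    fix i
    have "(\<chi> j. real_of_int (y$j)) \<in> cube y" by (auto simp: cube_def)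
    then have "(\<chi> j. real_of_int (y$j)) \<in> box4 z" using h by auto
    then have 1: "z$i \<le> y$i" by (auto simp: box4_def)
    have "(\<chi> j. real_of_int (y$j) + 3/2) \<in> cube y" by (auto simp: cube_def)
    then have "(\<chi> j. real_of_int (y$j) + 3/2) \<in> box4 z" using h by auto
    then have "real_of_int (y$i) + 3/2 < real_of_int (z$i) + 4" by (auto simp: box4_def)
    then have "y$i \<le> z$i + 2" by linarith
    with 1 show "z$i \<le> y$i \<and> y$i \<le> z$i + 2" by simp
  qed
next
  assume h: "\<forall>i. z$i \<le> y$i \<and> y$i \<le> z$i + 2"
  show "cube y \<subseteq> box4 z"
  proof
    fix x assume x: "x \<in> cube y"
    show "x \<in> box4 z" unfolding box4_def
    proof (safe)
      fix i
      have b: "z$i \<le> y$i" "y$i \<le> z$i + 2" using h by auto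
      have a: "real_of_int (z$i) \<le> real_of_int (y$i)" "real_of_int (y$i) \<le> real_of_int (z$i) + 2"
      proof -
        have "real_of_int (y$i) \<le> real_of_int (z$i + 2)" using b(2) by (simp only: of_int_le_iff)
        then show "real_of_int (y$i) \<le> real_of_int (z$i) + 2" by simp
      qed (use b(1) in simp)
      from x have "real_of_int (y $ i) \<le> x $ i \<and> x $ i < real_of_int (y $ i) + 2"
        by (auto simp: cube_def)
      with a show "real_of_int (z $ i) \<le> x $ i" "x $ i < real_of_int (z $ i) + 4" by linarith+
    qed
  qed
qed



lemma Nz_eq:
  assumes cp: "cube_packing CP"
  shows "N_z CP z = card {c \<in> res ` CP. \<forall>i. (c$i - z$i) mod 4 \<le> 2}"
proof -
  let ?A = "{y\<in>CP. cube y \<subseteq> box4 z}"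
  let ?B = "{c \<in> res ` CP. \<forall>i. (c$i - z$i) mod 4 \<le> 2}"
  have inv: "\<And>y k. y \<in> CP \<Longrightarrow> y + (\<chi> i. 4 * k$i) \<in> CP" using cp by (auto simp: cube_packing_def)
  have "bij_betw res ?A ?B"
  proof (rule bij_betw_imageI)
    show "inj_on res ?A"
    proof (rule inj_onI)
      fix y y' assume y: "y \<in> ?A" and y': "y' \<in> ?A" and e: "res y = res y'"
      show "y = y'"
      proof (rule vec_eq_iff[THEN iffD2], rule allI)
        fix i
        have "res y $ i = res y' $ i" using e by simp
        then have m: "y$i mod 4 = y'$i mod 4" by (simp add: res_def)
        have "z$i \<le> y$i" "y$i \<le> z$i+2" "z$i \<le> y'$i" "y'$i \<le> z$i+2"
          using y y' by (auto simp: cube_sub)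
        with m show "y$i = y'$i" by presburger
      qed
    qed
    show "res ` ?A = ?B"
    proof
      show "res ` ?A \<subseteq> ?B"
      proof
        fix c assume "c \<in> res ` ?A"
        then obtain y where y: "y \<in> ?A" and c: "c = res y" by auto
        have "\<forall>i. (c$i - z$i) mod 4 \<le> 2"
        proof
          fix i
          have "z$i \<le> y$i" "y$i \<le> z$i+2" using y by (auto simp: cube_sub)
          moreover have "c$i = y$i mod 4" using c by (simp add: res_def)
          ultimately show "(c$i - z$i) mod 4 \<le> 2" by presburger
        qed
        then show "c \<in> ?B" using y c by auto
      qed
      show "?B \<subseteq> res ` ?A"
      proof
        fix c assume cB: "c \<in> ?B"
        then obtain y0 where y0: "y0 \<in> CP" and c: "c = res y0" by auto
        have hw: "\<forall>i. (c$i - z$i) mod 4 \<le> 2" using cB by auto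
        define y where "y = (\<chi> i. z$i + (c$i - z$i) mod 4)"
        define k where "k = (\<chi> i. (y$i - y0$i) div 4)"
        have ci: "c$i = y0$i mod 4" for i using c by (simp add: res_def)
        have "y = y0 + (\<chi> i. 4 * k$i)"
        proof (rule vec_eq_iff[THEN iffD2], rule allI)
          fix i
          show "y $ i = (y0 + (\<chi> i. 4 * k$i)) $ i"
            unfolding y_def k_def using ci[of i] by simp presburger
        qed
        then have yCP: "y \<in> CP" using inv[OF y0] by simp
        have "res y = c"
        proof (rule vec_eq_iff[THEN iffD2], rule allI)
          fix i
          show "res y $ i = c $ i"
            unfolding y_def res_def using ci[of i] by simp presburger
        qed
        moreover have "cube y \<subseteq> box4 z"
          unfolding cube_sub
        proof
          fix i
          have "0 \<le> (c$i - z$i) mod 4" by simp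
          then show "z$i \<le> y$i \<and> y$i \<le> z$i + 2" using hw unfolding y_def by auto
        qed
        ultimately show "c \<in> res ` ?A" using yCP by (metis (mono_tags, lifting) image_eqI mem_Collect_eq)
      qed
    qed
  qed
  then show ?thesis unfolding N_z_def by (rule bij_betw_same_card)
qed

lemma res_box: "res ` CP \<subseteq> {z::int ^ 'd::finite. \<forall>i. 0 \<le> z $ i \<and> z $ i \<le> 3}"
  by (auto simp: res_def)

lemma res_finite: "finite (res ` (CP :: (int ^ 'd::finite) set))"
  by (rule finite_subset[OF res_box box_finite])

lemma prod_ind: "(\<Prod>i\<in>UNIV. wi (c$i) (z$i)) = (if \<forall>i. (c$i - z$i) mod 4 \<le> 2 then 1 else 0)"
proof (cases "\<forall>i. (c$i - z$i) mod 4 \<le> 2")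
  case True
  then show ?thesis by (simp add: wi_def)
next
  case False
  then obtain i where "\<not> (c$i - z$i) mod 4 \<le> 2" by auto
  then have "wi (c$i) (z$i) = 0" by (simp add: wi_def)
  then show ?thesis using False by (metis UNIV_I finite prod_zero)
qed

lemma Nz_sum:
  assumes cp: "cube_packing CP"
  shows "real (N_z CP z) = (\<Sum>c\<in>res ` CP. \<Prod>i\<in>UNIV. wi (c$i) (z$i))"
proof -
  have "real (N_z CP z) = (\<Sum>c\<in>{c \<in> res ` CP. \<forall>i. (c$i - z$i) mod 4 \<le> 2}. 1)"
    unfolding Nz_eq[OF cp] by simp
  also have "\<dots> = (\<Sum>c\<in>res ` CP. if \<forall>i. (c$i - z$i) mod 4 \<le> 2 then 1 else 0)"
    by (rule sum.inter_filter[OF res_finite])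
  also have "\<dots> = (\<Sum>c\<in>res ` CP. \<Prod>i\<in>UNIV. wi (c$i) (z$i))"
    by (simp add: prod_ind)
  finally show ?thesis .
qed

lemma prod_ineq:
  fixes \<delta> :: "'a \<Rightarrow> real"
  assumes "finite I" "\<And>i. 0 \<le> \<delta> i"
  shows "2 ^ card I * (2 + (\<Sum>i\<in>I. \<delta> i)) \<le> 2 * (\<Prod>i\<in>I. (2 + \<delta> i))"
  using assms(1)
proof (induction I rule: finite_induct)
  case empty
  then show ?case by simp
next
  case (insert j I)
  let ?S = "\<Sum>i\<in>I. \<delta> i"
  let ?n = "card I"
  have S0: "0 \<le> ?S" using assms(2) by (simp add: sum_nonneg)
  have d0: "0 \<le> \<delta> j" using assms(2) .
  have p: "(0::real) \<le> 2 ^ ?n" by simp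
  have "2 ^ card (insert j I) * (2 + (\<Sum>i\<in>insert j I. \<delta> i)) = 2 ^ ?n * (2 * (2 + ?S + \<delta> j))"
    using insert by simp
  also have "\<dots> \<le> 2 ^ ?n * ((2 + \<delta> j) * (2 + ?S))"
    using S0 d0 p by (intro mult_left_mono) (auto simp: algebra_simps)
  also have "\<dots> = (2 + \<delta> j) * (2 ^ ?n * (2 + ?S))" by simp
  also have "\<dots> \<le> (2 + \<delta> j) * (2 * (\<Prod>i\<in>I. (2 + \<delta> i)))"
    using insert.IH d0 by (intro mult_left_mono) auto
  also have "\<dots> = 2 * (\<Prod>i\<in>insert j I. (2 + \<delta> i))" using insert by simp
  finally show ?case .
qed

lemma int_sq: "(x::int) \<le> x^2"
proof (cases "x \<le> 0")
  case True
  have "0 \<le> x*x" by simp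
  with True show ?thesis unfolding power2_eq_square by linarith
next
  case False
  then have "x*1 \<le> x*x" by (intro mult_left_mono) auto
  then show ?thesis by (simp add: power2_eq_square)
qed

lemma balance_int:
  fixes a b c d q r :: int
  assumes e: "a + b + c + d = 4*q + r"
  shows "4*q^2 + 2*r*q + r \<le> a^2 + b^2 + c^2 + d^2"
proof -
  have s: "(a - q) + (b - q) + (c - q) + (d - q) \<le> (a - q)^2 + (b - q)^2 + (c - q)^2 + (d - q)^2"
    using int_sq by (meson add_mono)
  have id: "(a - q)^2 + (b - q)^2 + (c - q)^2 + (d - q)^2 = a^2 + b^2 + c^2 + d^2 - 2*q*(a+b+c+d) + 4*q^2"
    by (simp add: power2_eq_square algebra_simps)
  have id2: "2*q*(a+b+c+d) = 8*q^2 + 2*r*q" using e by (simp add: power2_eq_square algebra_simps)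
  have id3: "(a - q) + (b - q) + (c - q) + (d - q) = r" using e by simp
  show ?thesis using s id id2 id3 by linarith
qed

lemma balance:
  fixes m0 m1 m2 m3 q r :: nat
  assumes "m0 + m1 + m2 + m3 = 4*q + r"
  shows "real (4*q^2 + 2*r*q + r) \<le> real (m0^2 + m1^2 + m2^2 + m3^2)"
proof -
  have e: "int m0 + int m1 + int m2 + int m3 = 4 * int q + int r" using assms by linarith
  have "int (4*q^2 + 2*r*q + r) \<le> int (m0^2 + m1^2 + m2^2 + m3^2)"
    using balance_int[OF e] by simp
  then show ?thesis by (simp only: of_nat_le_iff zle_int)
qed



lemma range4: "0 \<le> (x::int) \<Longrightarrow> x \<le> 3 \<Longrightarrow> x \<in> {0,1,2,3}"
  by auto

lemma in_box4:
  assumes "c \<in> R" "R \<subseteq> {z::int ^ 'd::finite. \<forall>i. 0 \<le> z $ i \<and> z $ i \<le> 3}"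
  shows "c$i \<in> {0,1,2,3}"
proof -
  have "c \<in> {z::int ^ 'd::finite. \<forall>i. 0 \<le> z $ i \<and> z $ i \<le> 3}" using assms by blast
  then have "0 \<le> c$i" "c$i \<le> 3" by auto
  then show ?thesis by (rule range4)
qed

lemma ind_dec: "x \<in> {0,1,2,3::int} \<Longrightarrow> y \<in> {0,1,2,3::int} \<Longrightarrow>
  (if x = y then 1 else 0 :: real) = (\<Sum>j\<in>{0..3}. (if x = j then 1 else 0) * (if y = j then 1 else 0))"
  unfolding sum4 by auto

lemma ind_one: "x \<in> {0,1,2,3::int} \<Longrightarrow> 1 = (\<Sum>j\<in>{0..3}. if x = j then 1 else (0::real))"
  unfolding sum4 by auto

lemma count_coord:
  fixes R :: "(int ^ 'd::finite) set" and i :: 'd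
  assumes Rfin: "finite R" and RZ: "R \<subseteq> {z::int ^ 'd. \<forall>i. 0 \<le> z $ i \<and> z $ i \<le> 3}"
    and NR: "card R = 4 * q + r"
  shows "real (4*q^2 + 2*r*q + r) \<le> (\<Sum>c\<in>R. \<Sum>c'\<in>R. if c$i = c'$i then 1 else 0)"
proof -
  define n where "n j = card {c\<in>R. c$i = j}" for j
  have J: "{0..3::int} = {0,1,2,3}" by auto
  have ind: "(\<Sum>c\<in>R. if c$i = j then 1 else 0) = real (n j)" for j
  proof -
    have "real (n j) = (\<Sum>c\<in>{c\<in>R. c$i = j}. 1)" by (simp add: n_def)
    also have "\<dots> = (\<Sum>c\<in>R. if c$i = j then 1 else 0)" by (rule sum.inter_filter[OF Rfin])
    finally show ?thesis by simp
  qed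
  have dec: "(if c$i = c'$i then 1 else 0 :: real) = (\<Sum>j\<in>{0..3}. (if c$i = j then 1 else 0) * (if c'$i = j then 1 else 0))"
    if "c \<in> R" "c' \<in> R" for c c'
    by (rule ind_dec; rule in_box4[OF _ RZ]) (use that in auto)
  have "(\<Sum>c\<in>R. \<Sum>c'\<in>R. if c$i = c'$i then 1 else 0 :: real)
      = (\<Sum>c\<in>R. \<Sum>c'\<in>R. \<Sum>j\<in>{0..3}. (if c$i = j then 1 else 0) * (if c'$i = j then 1 else 0))"
    using dec by (intro sum.cong refl) auto
  also have "\<dots> = (\<Sum>c\<in>R. \<Sum>j\<in>{0..3}. \<Sum>c'\<in>R. (if c$i = j then 1 else 0) * (if c'$i = j then 1 else 0))"
    by (intro sum.cong refl, rule sum.swap)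
  also have "\<dots> = (\<Sum>j\<in>{0..3}. \<Sum>c\<in>R. \<Sum>c'\<in>R. (if c$i = j then 1 else 0) * (if c'$i = j then 1 else 0))"
    by (rule sum.swap)
  also have "\<dots> = (\<Sum>j\<in>{0..3}. (\<Sum>c\<in>R. if c$i = j then 1 else 0) * (\<Sum>c'\<in>R. if c'$i = j then 1 else 0))"
    by (simp only: sum_product)
  also have "\<dots> = (\<Sum>j\<in>{0..3}. real (n j) ^ 2)" by (simp add: ind power2_eq_square)
  finally have E: "(\<Sum>c\<in>R. \<Sum>c'\<in>R. if c$i = c'$i then 1 else 0 :: real) = real (n 0^2 + n 1^2 + n 2^2 + n 3^2)"
    unfolding J by simp
  have "real (card R) = (\<Sum>c\<in>R. 1)" by simp
  also have "\<dots> = (\<Sum>c\<in>R. \<Sum>j\<in>{0..3}. if c$i = j then 1 else 0)"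
  proof (intro sum.cong refl)
    fix c assume "c \<in> R"
    then show "1 = (\<Sum>j\<in>{0..3}. if c$i = j then 1 else (0::real))"
      by (intro ind_one in_box4[OF _ RZ])
  qed
  also have "\<dots> = (\<Sum>j\<in>{0..3}. \<Sum>c\<in>R. if c$i = j then 1 else 0)" by (rule sum.swap)
  also have "\<dots> = (\<Sum>j\<in>{0..3}. real (n j))" by (simp only: ind)
  finally have "real (card R) = real (n 0 + n 1 + n 2 + n 3)" unfolding J by simp
  then have "n 0 + n 1 + n 2 + n 3 = 4 * q + r" using NR by (simp only: of_nat_eq_iff)
  from balance[OF this] E show ?thesis by simp
qed

theorem theorem3:
  fixes CP :: "(int ^ 'd::finite) set" and q r :: nat
  assumes "cube_packing CP"
    and "num_cubes CP = 4 * q + r" and "r \<le> 3"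
  shows "moment 1 CP = (3 ^ CARD('d) / 4 ^ CARD('d)) * real (num_cubes CP)
    \<and> moment 1 CP + real (num_cubes CP) * (real (num_cubes CP) - 1) * 2 powi (- int CARD('d))
        + 2 powi (- int CARD('d)) * real CARD('d) * (2 * real q * (real q - 1) + real r * real q)
      \<le> moment 2 CP"
proof -
  let ?Z = "{z::int ^ 'd. \<forall>i. 0 \<le> z $ i \<and> z $ i \<le> 3}"
  define R where "R = res ` CP"
  define D where "D = CARD('d)"
  define N where "N = num_cubes CP"
  have resl: "res = (\<lambda>y::int^'d. \<chi> i. y $ i mod 4)" by (simp add: fun_eq_iff res_def)
  have NR: "N = card R" by (simp add: N_def R_def num_cubes_def resl)
  have Rfin: "finite R" unfolding R_def by (rule res_finite)
  have RZ: "R \<subseteq> ?Z" unfolding R_def by (rule res_box)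
  define w where "w c z = (\<Prod>i\<in>UNIV. wi (c$i) (z$i))" for c z :: "int^'d"
  define \<delta> :: "'d \<Rightarrow> int^'d \<Rightarrow> int^'d \<Rightarrow> real" where "\<delta> i c c' = (if c$i = c'$i then 1 else 0 :: real)" for i c c'
  have Nz: "real (N_z CP z) = (\<Sum>c\<in>R. w c z)" for z
    using Nz_sum[OF assms(1)] by (simp add: R_def w_def)
  have S1: "(\<Sum>z\<in>?Z. w c z) = 3^D" if "c \<in> R" for c
  proof -
    have "(\<Sum>z\<in>?Z. w c z) = (\<Prod>i\<in>UNIV. \<Sum>t\<in>{0..3}. wi (c$i) t)"
      unfolding w_def by (rule sum_prod_box)
    also have "\<dots> = (\<Prod>i\<in>(UNIV::'d set). 3)"
      using that RZ by (intro prod.cong refl wi_sum) auto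
    finally show ?thesis by (simp add: D_def)
  qed
  have S2: "(\<Sum>z\<in>?Z. w c z * w c' z) = (\<Prod>i\<in>UNIV. 2 + \<delta> i c c')" if "c \<in> R" "c' \<in> R" for c c'
  proof -
    have "(\<Sum>z\<in>?Z. w c z * w c' z) = (\<Sum>z\<in>?Z. \<Prod>i\<in>UNIV. wi (c$i) (z$i) * wi (c'$i) (z$i))"
      by (simp add: w_def prod.distrib)
    also have "\<dots> = (\<Prod>i\<in>UNIV. \<Sum>t\<in>{0..3}. wi (c$i) t * wi (c'$i) t)"
      by (rule sum_prod_box)
    also have "\<dots> = (\<Prod>i\<in>UNIV. 2 + \<delta> i c c')"
      using that RZ by (intro prod.cong refl) (subst wi_sum2, auto simp: \<delta>_def)
    finally show ?thesis .
  qed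
  have m1: "moment 1 CP = 3^D / 4^D * real N"
  proof -
    have "moment 1 CP = 1 / 4^D * (\<Sum>z\<in>?Z. \<Sum>c\<in>R. w c z)"
      by (simp add: moment_def avg_def Nz D_def)
    also have "\<dots> = 1 / 4^D * (\<Sum>c\<in>R. \<Sum>z\<in>?Z. w c z)" by (simp only: sum.swap[of _ ?Z])
    also have "\<dots> = 1 / 4^D * (\<Sum>c\<in>R. 3^D)" using S1 by simp
    finally show ?thesis by (simp add: NR)
  qed
  have m2: "moment 2 CP = 1 / 4^D * (\<Sum>c\<in>R. \<Sum>c'\<in>R. \<Prod>i\<in>UNIV. 2 + \<delta> i c c')"
  proof -
    have "moment 2 CP = 1 / 4^D * (\<Sum>z\<in>?Z. (\<Sum>c\<in>R. w c z) * (\<Sum>c'\<in>R. w c' z))"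
      by (simp add: moment_def avg_def Nz D_def power2_eq_square)
    also have "\<dots> = 1 / 4^D * (\<Sum>z\<in>?Z. \<Sum>c\<in>R. \<Sum>c'\<in>R. w c z * w c' z)"
      by (simp add: sum_product)
    also have "\<dots> = 1 / 4^D * (\<Sum>c\<in>R. \<Sum>z\<in>?Z. \<Sum>c'\<in>R. w c z * w c' z)"
      by (subst sum.swap, rule refl)
    also have "\<dots> = 1 / 4^D * (\<Sum>c\<in>R. \<Sum>c'\<in>R. \<Sum>z\<in>?Z. w c z * w c' z)"
      by (subst (2) sum.swap, rule refl)
    also have "\<dots> = 1 / 4^D * (\<Sum>c\<in>R. \<Sum>c'\<in>R. \<Prod>i\<in>UNIV. 2 + \<delta> i c c')"
      using S2 by simp
    finally show ?thesis .
  qed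
  define P where "P = (\<Sum>c\<in>R. \<Sum>c'\<in>R. \<Prod>i\<in>UNIV. 2 + \<delta> i c c')"
  define A :: real where "A = 2^D"
  define B :: real where "B = 3^D"
  define K :: real where "K = real (4*q^2 + 2*r*q + r)"
  have pw: "2^D * (2 + (\<Sum>i\<in>UNIV. \<delta> i c c')) + (if c = c' then 2*3^D - 2^D*(2 + real D) else 0)
       \<le> 2 * (\<Prod>i\<in>UNIV. 2 + \<delta> i c c')" for c c'
  proof (cases "c = c'")
    case True
    then show ?thesis by (simp add: \<delta>_def D_def)
  next
    case False
    have "2 ^ card (UNIV::'d set) * (2 + (\<Sum>i\<in>UNIV. \<delta> i c c')) \<le> 2 * (\<Prod>i\<in>UNIV. (2 + \<delta> i c c'))"
      by (rule prod_ineq) (auto simp: \<delta>_def)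
    with False show ?thesis by (simp add: D_def)
  qed
  have cnt: "K \<le> (\<Sum>c\<in>R. \<Sum>c'\<in>R. \<delta> i c c')" for i
    unfolding K_def \<delta>_def using count_coord[OF Rfin RZ, of q r i] NR assms(2) N_def by simp
  have T: "(\<Sum>c\<in>R. \<Sum>c'\<in>R. \<Sum>i\<in>UNIV. \<delta> i c c') \<ge> real D * K"
  proof -
    have "(\<Sum>c\<in>R. \<Sum>c'\<in>R. \<Sum>i\<in>UNIV. \<delta> i c c') = (\<Sum>i\<in>UNIV. \<Sum>c\<in>R. \<Sum>c'\<in>R. \<delta> i c c')"
      by (subst (2) sum.swap, subst sum.swap, rule refl)
    also have "\<dots> \<ge> (\<Sum>i\<in>(UNIV::'d set). K)" by (intro sum_mono cnt)
    finally show ?thesis by (simp add: D_def)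
  qed
  have sumL: "(\<Sum>c\<in>R. \<Sum>c'\<in>R. 2^D * (2 + (\<Sum>i\<in>UNIV. \<delta> i c c')) + (if c = c' then 2*3^D - 2^D*(2 + real D) else 0))
     = A * (2 * real N * real N + (\<Sum>c\<in>R. \<Sum>c'\<in>R. \<Sum>i\<in>UNIV. \<delta> i c c')) + real N * (2*B - A*(2 + real D))"
    using Rfin by (simp add: sum.distrib sum_distrib_left distrib_left NR A_def B_def)
  have "(\<Sum>c\<in>R. \<Sum>c'\<in>R. 2^D * (2 + (\<Sum>i\<in>UNIV. \<delta> i c c')) + (if c = c' then 2*3^D - 2^D*(2 + real D) else 0))
      \<le> (\<Sum>c\<in>R. \<Sum>c'\<in>R. 2 * (\<Prod>i\<in>UNIV. 2 + \<delta> i c c'))"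
    by (intro sum_mono pw)
  also have "\<dots> = 2 * P" by (simp add: P_def sum_distrib_left)
  finally have PB: "A * (2 * real N * real N + real D * K) + real N * (2*B - A*(2 + real D)) \<le> 2 * P"
    using sumL T A_def by (smt (verit) mult_left_mono zero_le_power)
  have Apos: "A > 0" by (simp add: A_def)
  have pi: "(2::real) powi (- int CARD('d)) = 1 / A" by (simp add: A_def D_def power_int_minus divide_inverse)
  have four: "(4::real)^D = A * A" by (simp add: A_def power_mult_distrib[symmetric])
  have Nq: "real N = 4 * real q + real r" using assms(2) N_def by simp
  have key: "A * (2 * real N * real N + real D * K) + real N * (2*B - A*(2 + real D))
     = 2 * (B * real N + A * real N * (real N - 1) + A * real D * (2 * real q * (real q - 1) + real r * real q))"
    unfolding Nq K_def by (simp add: algebra_simps power2_eq_square)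
  have goal: "B * real N + A * real N * (real N - 1) + A * real D * (2 * real q * (real q - 1) + real r * real q) \<le> P"
  proof -
    have "2 * (B * real N + A * real N * (real N - 1) + A * real D * (2 * real q * (real q - 1) + real r * real q)) \<le> 2 * P"
      using PB unfolding key .
    then show ?thesis by simp
  qed
  show ?thesis
  proof
    show "moment 1 CP = (3 ^ CARD('d) / 4 ^ CARD('d)) * real (num_cubes CP)"
      using m1 by (simp add: D_def N_def)
  next
    have "moment 1 CP + real N * (real N - 1) * (1 / A) + (1 / A) * real D * (2 * real q * (real q - 1) + real r * real q)
       = (B * real N + A * real N * (real N - 1) + A * real D * (2 * real q * (real q - 1) + real r * real q)) / (A * A)"
      using Apos unfolding m1 four B_def by (simp add: field_simps)
    also have "\<dots> \<le> P / (A * A)" using goal Apos by (simp add: divide_right_mono)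
    also have "\<dots> = moment 2 CP" unfolding m2 four P_def by simp
    finally show "moment 1 CP + real (num_cubes CP) * (real (num_cubes CP) - 1) * 2 powi (- int CARD('d))
        + 2 powi (- int CARD('d)) * real CARD('d) * (2 * real q * (real q - 1) + real r * real q)
      \<le> moment 2 CP" unfolding pi by (simp add: D_def N_def)
  qed
qed

end
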